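(* Let $m=2^l m_1$ with $l\ge0$ and $m_1$ odd (and $m\ge2$). Then $L_m(3)=l$.
   Context: The Ducci function $D:\mathbb{Z}_m^3\to\mathbb{Z}_m^3$ is $D(x_1,x_2,x_3)=(x_1+x_2,\,x_2+x_3,\,x_3+x_1)$, entries mod $m$. For $\mathbf{u}\in\mathbb{Z}_m^3$, $\mathrm{Len}(\mathbf{u})$ is the smallest $j\ge0$ such that $D^{j+k}(\mathbf{u})=D^j(\mathbf{u})$ for some $k\ge1$, and $L_m(3)=\mathrm{Len}(0,0,1)$. *)

theory Defs
  imports Main
begin

type_synonym triple = "nat \<times> nat \<times> nat"

definition ducci :: "nat \<Rightarrow> triple \<Rightarrow> triple" where
  "ducci m u = (case u of (x1, x2, x3) \<Rightarrow>
      ((x1 + x2) mod m, (x2 + x3) mod m, (x3 + x1) mod m))"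

definition ducci_len :: "nat \<Rightarrow> triple \<Rightarrow> nat" where
  "ducci_len m u = (LEAST j. \<exists>k\<ge>1. (ducci m ^^ (j + k)) u = (ducci m ^^ j) u)"

definition L3 :: "nat \<Rightarrow> nat" where
  "L3 m = ducci_len m (0, 0, 1)"

end

theory Submission
  imports Defs "HOL-Number_Theory.Number_Theory"
begin

definition draw :: "triple \<Rightarrow> triple" where
  "draw u = (case u of (x1, x2, x3) \<Rightarrow> (x1 + x2, x2 + x3, x3 + x1))"

definition modt :: "nat \<Rightarrow> triple \<Rightarrow> triple" where
  "modt m u = (case u of (x1, x2, x3) \<Rightarrow> (x1 mod m, x2 mod m, x3 mod m))"

definition tsum :: "triple \<Rightarrow> nat" where
  "tsum u = (case u of (x1, x2, x3) \<Rightarrow> x1 + x2 + x3)"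

lemma ducci_modt: "ducci m (modt m x) = modt m (draw x)"
  by (cases x) (auto simp: ducci_def modt_def draw_def mod_add_eq)

lemma ducci_pow_modt: "(ducci m ^^ n) (modt m x) = modt m ((draw ^^ n) x)"
proof (induction n)
  case 0 then show ?case by simp
next
  case (Suc n) then show ?case by (simp add: ducci_modt)
qed

lemma tsum_draw: "tsum (draw x) = 2 * tsum x"
  by (cases x) (auto simp: tsum_def draw_def)

lemma tsum_pow: "tsum ((draw ^^ n) x) = 2 ^ n * tsum x"
  by (induction n) (auto simp: tsum_draw)

lemma draw6: "(draw ^^ 6) (a, b, d) = (a + 21*(a+b+d), b + 21*(a+b+d), d + 21*(a+b+d))"
  by (simp add: draw_def numeral_eq_Suc)

lemma draw6q: "\<exists>c. (draw ^^ (6*q)) (a, b, d) = (a + c, b + c, d + c) \<and> 3*c + (a+b+d) = 64^q * (a+b+d)"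
proof (induction q)
  case 0 then show ?case by simp
next
  case (Suc q)
  then obtain c where c: "(draw ^^ (6*q)) (a, b, d) = (a + c, b + c, d + c)"
     "3*c + (a+b+d) = 64^q * (a+b+d)" by blast
  have e: "(draw ^^ (6*Suc q)) (a, b, d) = (draw ^^ 6) ((draw ^^ (6*q)) (a, b, d))"
    unfolding mult_Suc_right funpow_add by simp
  show ?case
  proof (rule exI[of _ "c + 21*(a+b+d+3*c)"], intro conjI)
    show "(draw ^^ (6 * Suc q)) (a, b, d) =
      (a + (c + 21 * (a + b + d + 3 * c)), b + (c + 21 * (a + b + d + 3 * c)), d + (c + 21 * (a + b + d + 3 * c)))"
      unfolding e c(1) draw6 by simp
    show "3 * (c + 21 * (a + b + d + 3 * c)) + (a + b + d) = 64 ^ Suc q * (a + b + d)"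
      using c(2) by simp
  qed
qed

lemma L3_alt: assumes "m \<ge> 2" shows
  "L3 m = (LEAST j. \<exists>k\<ge>1. modt m ((draw ^^ (j + k)) (0,0,1)) = modt m ((draw ^^ j) (0,0,1)))"
proof -
  have "modt m (0,0,1) = (0,0,1)" using assms by (simp add: modt_def)
  then have "\<And>n. (ducci m ^^ n) (0,0,1) = modt m ((draw ^^ n) (0,0,1))"
    by (metis ducci_pow_modt)
  then show ?thesis unfolding L3_def ducci_len_def by simp
qed

theorem theorem4p1:
  fixes m l m1 :: nat
  assumes "m \<ge> 2" and "m = 2 ^ l * m1" and "odd m1"
  shows "L3 m = l"
  unfolding L3_alt[OF assms(1)]
proof (rule Least_equality)
  define q where "q = totient (3*m1)"
  have m1pos: "m1 > 0" using assms(3) by (cases m1) auto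
  have qpos: "q \<ge> 1" unfolding q_def using m1pos
    by (metis One_nat_def Suc_leI mult_pos_pos totient_gt_0_iff zero_less_numeral)
  have cop: "coprime (64::nat) (3*m1)"
  proof -
    have "coprime (2::nat) (3*m1)" using assms(3) by simp
    then have "coprime ((2::nat)^6) (3*m1)" using coprime_power_left_iff by blast
    moreover have "(2::nat)^6 = 64" by simp
    ultimately show ?thesis by metis
  qed
  have "[64 ^ q = 1] (mod (3*m1))" unfolding q_def using euler_theorem[OF cop] .
  then have dv: "3*m1 dvd 64^q - 1" by (rule cong_to_1_nat)
  obtain a b d where abd: "(draw ^^ l) (0,0,1) = (a,b,d)" by (metis prod_cases3)
  have s: "a + b + d = 2^l" using tsum_pow[of l "(0,0,1)"] abd by (simp add: tsum_def)
  obtain c where c: "(draw ^^ (6*q)) (a, b, d) = (a + c, b + c, d + c)"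
     "3*c + (a+b+d) = 64^q * (a+b+d)" using draw6q by blast
  have c3: "3*c = (64^q - 1) * 2^l" using c(2) s by (simp add: diff_mult_distrib)
  have "3*m1*2^l dvd (64^q-1)*2^l" using dv by (rule mult_dvd_mono) simp
  moreover have "3*m1*2^l = 3*m" using assms(2) by simp
  ultimately have "3*m dvd 3*c" using c3 by simp
  then have mc: "m dvd c" by simp
  have "(draw ^^ (l + 6*q)) (0,0,1) = (a + c, b + c, d + c)"
    by (simp only: add.commute[of l] funpow_add o_apply abd c(1))
  then have "modt m ((draw ^^ (l + 6*q)) (0,0,1)) = modt m ((draw ^^ l) (0,0,1))"
    using mc abd by (auto simp: modt_def)
  then show "\<exists>k\<ge>1. modt m ((draw ^^ (l + k)) (0,0,1)) = modt m ((draw ^^ l) (0,0,1))"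
    using qpos by (intro exI[of _ "6*q"]) auto
next
  fix j assume "\<exists>k\<ge>1. modt m ((draw ^^ (j + k)) (0,0,1)) = modt m ((draw ^^ j) (0,0,1))"
  then obtain k where k: "k \<ge> 1" "modt m ((draw ^^ (j + k)) (0,0,1)) = modt m ((draw ^^ j) (0,0,1))"
    by blast
  have tm: "tsum (modt m x) mod m = tsum x mod m" for x
    by (cases x) (simp add: tsum_def modt_def, metis mod_add_eq mod_add_left_eq)
  have "tsum ((draw ^^ (j + k)) (0,0,1)) mod m = tsum ((draw ^^ j) (0,0,1)) mod m"
    using k(2) tm by metis
  then have "2^(j+k) mod m = 2^j mod m" by (simp only: tsum_pow) (simp add: tsum_def)
  then have "m dvd 2^(j+k) - 2^j"
    by (metis mod_eq_dvd_iff_nat one_le_numeral power_increasing le_add1)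
  moreover have "(2::nat)^(j+k) - 2^j = 2^j * (2^k - 1)"
    by (simp add: power_add diff_mult_distrib2)
  ultimately have "2^l dvd (2::nat)^j * (2^k - 1)" using assms(2) by (metis dvd_mult_left)
  moreover have "coprime ((2::nat)^l) (2^k - 1)"
  proof -
    have "odd ((2::nat)^k - 1)" using k(1) by simp
    then show ?thesis by simp
  qed
  ultimately have "(2::nat)^l dvd 2^j" using coprime_dvd_mult_left_iff by blast
  then show "j \<ge> l" using power_dvd_imp_le by fastforce
qed

end
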